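(* Every line graph is perfectly divisible; that is, for every graph $G$, the line graph $L(G)$ is perfectly divisible.
   Context: All graphs are finite and simple. The line graph $L(G)$ has vertex set $E(G)$, two edges being adjacent in $L(G)$ if they share an endpoint in $G$. A graph is perfect if every induced subgraph $H$ satisfies $\chi(H)=\omega(H)$. A graph $G$ is perfectly divisible if for every induced subgraph $H$ of $G$, $V(H)$ can be partitioned into $A,B$ with $H[A]$ perfect and $\omega(H[B])<\omega(H)$. *)

theory Defs
  imports Main
begin

text \<open>A graph is given by a vertex set V and an adjacency predicate adj
(only its restriction to V matters). Induced subgraphs are vertex subsets.\<close>

definition is_clique :: "('v \<Rightarrow> 'v \<Rightarrow> bool) \<Rightarrow> 'v set \<Rightarrow> bool" where
  "is_clique adj C \<longleftrightarrow> (\<forall>x\<in>C. \<forall>y\<in>C. x \<noteq> y \<longrightarrow> adj x y)"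

definition clique_number :: "('v \<Rightarrow> 'v \<Rightarrow> bool) \<Rightarrow> 'v set \<Rightarrow> nat" where
  "clique_number adj H = Max {card C | C. C \<subseteq> H \<and> is_clique adj C}"

definition proper_colouring :: "('v \<Rightarrow> 'v \<Rightarrow> bool) \<Rightarrow> 'v set \<Rightarrow> nat \<Rightarrow> ('v \<Rightarrow> nat) \<Rightarrow> bool" where
  "proper_colouring adj H k f \<longleftrightarrow>
     (\<forall>x\<in>H. f x < k) \<and> (\<forall>x\<in>H. \<forall>y\<in>H. x \<noteq> y \<and> adj x y \<longrightarrow> f x \<noteq> f y)"

definition chromatic_number :: "('v \<Rightarrow> 'v \<Rightarrow> bool) \<Rightarrow> 'v set \<Rightarrow> nat" where
  "chromatic_number adj H = (LEAST k. \<exists>f. proper_colouring adj H k f)"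

definition perfect :: "'v set \<Rightarrow> ('v \<Rightarrow> 'v \<Rightarrow> bool) \<Rightarrow> bool" where
  "perfect V adj \<longleftrightarrow> (\<forall>H\<subseteq>V. chromatic_number adj H = clique_number adj H)"

text \<open>Perfect divisibility; the condition is required for nonempty induced
subgraphs (for the empty graph omega(B) < omega(H) = 0 is impossible).\<close>
definition perfectly_divisible :: "'v set \<Rightarrow> ('v \<Rightarrow> 'v \<Rightarrow> bool) \<Rightarrow> bool" where
  "perfectly_divisible V adj \<longleftrightarrow>
     (\<forall>H\<subseteq>V. H \<noteq> {} \<longrightarrow>
        (\<exists>A B. A \<union> B = H \<and> A \<inter> B = {} \<and> perfect A adj \<and>
               clique_number adj B < clique_number adj H))"

definition simple_graph :: "'a set \<Rightarrow> 'a set set \<Rightarrow> bool" where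
  "simple_graph V E \<longleftrightarrow> finite V \<and> (\<forall>e\<in>E. \<exists>u v. u \<in> V \<and> v \<in> V \<and> u \<noteq> v \<and> e = {u, v})"

definition line_adj :: "'a set \<Rightarrow> 'a set \<Rightarrow> bool" where
  "line_adj e f \<longleftrightarrow> e \<noteq> f \<and> e \<inter> f \<noteq> {}"

end

theory Submission
  imports Defs
begin

lemma cn_set_finite: "finite H \<Longrightarrow> finite {card C | C. C \<subseteq> H \<and> is_clique adj C}"
proof -
  assume "finite H"
  have "{card C | C. C \<subseteq> H \<and> is_clique adj C} \<subseteq> card ` Pow H" by auto
  thus ?thesis using \<open>finite H\<close> finite_subset by blast
qed

lemma clique_empty: "is_clique adj {}" by (simp add: is_clique_def)

lemma cn_ge: "finite H \<Longrightarrow> C \<subseteq> H \<Longrightarrow> is_clique adj C \<Longrightarrow> card C \<le> clique_number adj H"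
  unfolding clique_number_def by (rule Max_ge[OF cn_set_finite]) auto

lemma cn_obtain: "finite H \<Longrightarrow> \<exists>C\<subseteq>H. is_clique adj C \<and> card C = clique_number adj H"
proof -
  assume f: "finite H"
  have "clique_number adj H \<in> {card C | C. C \<subseteq> H \<and> is_clique adj C}"
    unfolding clique_number_def
    apply (rule Max_in[OF cn_set_finite[OF f]])
    using clique_empty by blast
  thus ?thesis by auto
qed

lemma cn_mono: "finite H \<Longrightarrow> H' \<subseteq> H \<Longrightarrow> clique_number adj H' \<le> clique_number adj H"
proof -
  assume a: "finite H" "H' \<subseteq> H"
  obtain C where "C \<subseteq> H'" "is_clique adj C" "card C = clique_number adj H'"
    using cn_obtain[of H' adj] a finite_subset by blast
  thus ?thesis using cn_ge[of H C adj] a by auto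
qed

lemma colour_lb: assumes "finite H" "proper_colouring adj H k f"
  shows "clique_number adj H \<le> k"
proof -
  obtain C where C: "C \<subseteq> H" "is_clique adj C" "card C = clique_number adj H"
    using cn_obtain[OF assms(1)] by blast
  have "inj_on f C" using C assms(2) unfolding inj_on_def is_clique_def proper_colouring_def by blast
  hence "card C = card (f ` C)" by (simp add: card_image)
  also have "f ` C \<subseteq> {..<k}" using C assms(2) unfolding proper_colouring_def by auto
  hence "card (f ` C) \<le> k" using card_mono[of "{..<k}"] by fastforce
  finally show ?thesis using C by simp
qed

lemma perfect_intro:
  assumes "finite A" "\<And>H. H \<subseteq> A \<Longrightarrow> \<exists>f. proper_colouring adj H (clique_number adj H) f"
  shows "perfect A adj"
  unfolding perfect_def
proof (intro allI impI)
  fix H assume H: "H \<subseteq> A"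
  hence fH: "finite H" using assms(1) finite_subset by blast
  obtain f where f: "proper_colouring adj H (clique_number adj H) f" using assms(2)[OF H] by blast
  have le: "chromatic_number adj H \<le> clique_number adj H"
    unfolding chromatic_number_def by (rule Least_le) (use f in blast)
  have "\<exists>g. proper_colouring adj H (chromatic_number adj H) g"
    unfolding chromatic_number_def by (rule LeastI_ex) (use f in blast)
  then obtain g where "proper_colouring adj H (chromatic_number adj H) g" by blast
  hence "clique_number adj H \<le> chromatic_number adj H" using colour_lb fH by blast
  thus "chromatic_number adj H = clique_number adj H" using le by simp
qed

definition leafy :: "'a set set \<Rightarrow> bool" where
  "leafy F \<longleftrightarrow> (\<forall>F'\<subseteq>F. F' \<noteq> {} \<longrightarrow> (\<exists>e\<in>F'. \<exists>u\<in>e. \<forall>f\<in>F'. u \<in> f \<longrightarrow> f = e))"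

definition twosets :: "'a set set \<Rightarrow> bool" where
  "twosets H \<longleftrightarrow> (\<forall>e\<in>H. \<exists>u v. u \<noteq> v \<and> e = {u, v})"

lemma leafy_subset: "leafy F \<Longrightarrow> F' \<subseteq> F \<Longrightarrow> leafy F'"
  unfolding leafy_def by (meson subset_trans)

lemma leafy_empty: "leafy {}"
  unfolding leafy_def by simp

lemma leafy_insert:
  assumes "leafy F" "u \<in> e" "\<forall>f\<in>F. u \<notin> f"
  shows "leafy (insert e F)"
  unfolding leafy_def
proof (intro allI impI)
  fix F' assume F': "F' \<subseteq> insert e F" "F' \<noteq> {}"
  show "\<exists>e\<in>F'. \<exists>u\<in>e. \<forall>f\<in>F'. u \<in> f \<longrightarrow> f = e"
  proof (cases "e \<in> F'")
    case True
    have "\<forall>f\<in>F'. u \<in> f \<longrightarrow> f = e"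
    proof (intro ballI impI)
      fix f assume "f \<in> F'" "u \<in> f"
      hence "f \<in> insert e F" using F'(1) by blast
      thus "f = e" using \<open>u \<in> f\<close> assms(3) by auto
    qed
    then show ?thesis using True assms(2) by blast
  next
    case False
    hence "F' \<subseteq> F" using F'(1) by auto
    then show ?thesis using assms(1) F' unfolding leafy_def by blast
  qed
qed

lemma line_adj_sym: "line_adj x y = line_adj y x"
  unfolding line_adj_def by blast

lemma leafy_colour:
  assumes "finite F" "leafy F" "twosets F"
  shows "\<exists>f. proper_colouring line_adj F (clique_number line_adj F) f"
  using assms
proof (induction "card F" arbitrary: F rule: less_induct)
  case less
  show ?case
  proof (cases "F = {}")
    case True
    then show ?thesis unfolding proper_colouring_def by simp
  next
    case False
    then obtain e u where eu: "e \<in> F" "u \<in> e" "\<forall>f\<in>F. u \<in> f \<longrightarrow> f = e"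
      using less.prems(2) unfolding leafy_def by blast
    obtain p q where pq: "p \<noteq> q" "e = {p, q}" using less.prems(3) eu(1) unfolding twosets_def by blast
    obtain v where v: "e = {u, v}" using pq eu(2) by blast
    define F0 where "F0 = F - {e}"
    have cF0: "card F0 < card F" unfolding F0_def using eu(1) less.prems(1)
      by (meson card_Diff1_less)
    have fF0: "finite F0" using less.prems(1) F0_def by simp
    have lF0: "leafy F0" using leafy_subset[OF less.prems(2)] F0_def by blast
    have tF0: "twosets F0" using less.prems(3) F0_def unfolding twosets_def by simp
    obtain g where g: "proper_colouring line_adj F0 (clique_number line_adj F0) g"
      using less.hyps[OF cF0 fF0 lF0 tF0] by blast
    have le0: "clique_number line_adj F0 \<le> clique_number line_adj F"
      using cn_mono[OF less.prems(1)] F0_def by blast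
    define N where "N = {f\<in>F0. line_adj e f}"
    have Nv: "\<forall>f\<in>N. v \<in> f"
    proof
      fix f assume f: "f \<in> N"
      hence "f \<in> F" "f \<noteq> e" "f \<inter> e \<noteq> {}" unfolding N_def F0_def line_adj_def by auto
      then show "v \<in> f" using eu(3) v by blast
    qed
    have vE: "v \<in> e" using v by simp
    have cl: "is_clique line_adj (insert e N)"
      unfolding is_clique_def line_adj_def
    proof (intro ballI impI conjI)
      fix x y assume "x \<in> insert e N" "y \<in> insert e N" "x \<noteq> y"
      hence "v \<in> x" "v \<in> y" using Nv vE by auto
      thus "x \<inter> y \<noteq> {}" by blast
    qed
    have eN: "e \<notin> N" unfolding N_def F0_def by simp
    have fN: "finite N" using fF0 N_def by simp
    have sub: "insert e N \<subseteq> F" unfolding N_def F0_def using eu(1) by blast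
    have "card (insert e N) \<le> clique_number line_adj F" by (rule cn_ge[OF less.prems(1) sub cl])
    hence cN: "card N < clique_number line_adj F" using eN fN by simp
    have "card (g ` N) < card {..<clique_number line_adj F}"
      using card_image_le[OF fN, of g] cN by simp
    hence "\<not> {..<clique_number line_adj F} \<subseteq> g ` N"
      using card_mono[OF finite_imageI[OF fN]] by fastforce
    then obtain c where c: "c < clique_number line_adj F" "c \<notin> g ` N" by auto
    define h where "h = g(e := c)"
    have "proper_colouring line_adj F (clique_number line_adj F) h"
      unfolding proper_colouring_def
    proof (intro conjI ballI impI)
      fix x assume x: "x \<in> F"
      show "h x < clique_number line_adj F"
      proof (cases "x = e")
        case True thus ?thesis using c h_def by simp
      next
        case False
        hence "x \<in> F0" using x F0_def by simp
        hence "g x < clique_number line_adj F0" using g unfolding proper_colouring_def by blast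
        thus ?thesis using False h_def le0 by simp
      qed
    next
      fix x y assume xy: "x \<in> F" "y \<in> F" "x \<noteq> y \<and> line_adj x y"
      show "h x \<noteq> h y"
      proof (cases "x = e")
        case True
        hence "y \<in> N" using xy unfolding N_def F0_def by auto
        thus ?thesis using True xy c h_def by auto
      next
        case xe: False
        show ?thesis
        proof (cases "y = e")
          case True
          hence "x \<in> N" using xy line_adj_sym unfolding N_def F0_def by auto
          thus ?thesis using True xy c h_def by auto
        next
          case False
          hence "x \<in> F0" "y \<in> F0" using xe xy F0_def by auto
          thus ?thesis using g xy xe False h_def unfolding proper_colouring_def by auto
        qed
      qed
    qed
    thus ?thesis by blast
  qed
qed

lemma leafy_perfect:
  assumes "finite A" "leafy A" "twosets A"
  shows "perfect A line_adj"
proof (rule perfect_intro[OF assms(1)])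
  fix H assume H: "H \<subseteq> A"
  have "finite H" using H assms(1) by (rule finite_subset)
  moreover have "leafy H" using leafy_subset[OF assms(2) H] .
  moreover have "twosets H" using assms(3) H unfolding twosets_def by (meson subsetD)
  ultimately show "\<exists>f. proper_colouring line_adj H (clique_number line_adj H) f" by (rule leafy_colour)
qed

lemma max_card_ex:
  assumes "finite S" "S \<noteq> {}"
  shows "\<exists>A\<in>S. \<forall>A'\<in>S. card A' \<le> card A"
proof -
  have "Max (card ` S) \<in> card ` S" using assms by simp
  then obtain A where A: "A \<in> S" "card A = Max (card ` S)" by auto
  have "\<forall>A'\<in>S. card A' \<le> card A" using A(2) assms(1) by simp
  thus ?thesis using A(1) by blast
qed

lemma cover:
  assumes "finite H" "leafy F" "F \<subseteq> H"
  shows "\<exists>A. F \<subseteq> A \<and> A \<subseteq> H \<and> leafy A \<and> (\<forall>v. (\<exists>e\<in>H. v \<in> e) \<longrightarrow> (\<exists>e\<in>A. v \<in> e))"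
proof -
  define S where "S = {A. F \<subseteq> A \<and> A \<subseteq> H \<and> leafy A}"
  have "S \<subseteq> Pow H" unfolding S_def by blast
  hence fS: "finite S" using assms(1) finite_subset by blast
  have "F \<in> S" using assms S_def by blast
  then obtain A where A: "A \<in> S" "\<forall>A'\<in>S. card A' \<le> card A" using max_card_ex[OF fS] by blast
  have "\<forall>v. (\<exists>e\<in>H. v \<in> e) \<longrightarrow> (\<exists>e\<in>A. v \<in> e)"
  proof (intro allI impI, rule ccontr)
    fix v assume v: "\<exists>e\<in>H. v \<in> e" "\<not> (\<exists>e\<in>A. v \<in> e)"
    then obtain e where e: "e \<in> H" "v \<in> e" by blast
    have eA: "e \<notin> A" using v e by blast
    have lA: "leafy A" using A(1) unfolding S_def by simp
    have "\<forall>f\<in>A. v \<notin> f" using v(2) by simp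
    hence "leafy (insert e A)" using leafy_insert[OF lA e(2)] by simp
    moreover have "F \<subseteq> insert e A" "insert e A \<subseteq> H" using A(1) e(1) unfolding S_def by auto
    ultimately have "insert e A \<in> S" unfolding S_def by simp
    hence "card (insert e A) \<le> card A" using A(2) by blast
    moreover have "finite A" using A(1) S_def assms(1) finite_subset by blast
    ultimately show False using eA by simp
  qed
  thus ?thesis using A(1) S_def by blast
qed

lemma clique_struct:
  assumes "twosets C" "is_clique line_adj C"
  shows "(\<exists>v. \<forall>e\<in>C. v \<in> e) \<or> (\<exists>a b c. a \<noteq> b \<and> b \<noteq> c \<and> a \<noteq> c \<and> C = {{a,b},{b,c},{a,c}})"
proof (cases "C = {}")
  case True thus ?thesis by simp
next
  case False
  then obtain e1 where e1: "e1 \<in> C" by blast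
  obtain a b where ab: "a \<noteq> b" "e1 = {a,b}" using assms(1) e1 unfolding twosets_def by blast
  have adj: "\<And>x y. x \<in> C \<Longrightarrow> y \<in> C \<Longrightarrow> x \<noteq> y \<Longrightarrow> x \<inter> y \<noteq> {}"
    using assms(2) unfolding is_clique_def line_adj_def by blast
  show ?thesis
  proof (cases "\<forall>e\<in>C. a \<in> e")
    case True thus ?thesis by blast
  next
    case False
    then obtain e2 where e2: "e2 \<in> C" "a \<notin> e2" by blast
    have "e2 \<noteq> e1" using e2 ab by auto
    hence "e2 \<inter> e1 \<noteq> {}" using adj e1 e2 by blast
    hence be2: "b \<in> e2" using e2(2) ab by auto
    obtain p q where pq: "p \<noteq> q" "e2 = {p,q}" using assms(1) e2 unfolding twosets_def by blast
    obtain c where c: "e2 = {b,c}" using pq be2 by auto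
    have cb: "c \<noteq> b" using pq c by auto
    have ca: "c \<noteq> a" using e2(2) c by auto
    show ?thesis
    proof (cases "\<forall>e\<in>C. b \<in> e")
      case True thus ?thesis by blast
    next
      case False
      then obtain e3 where e3: "e3 \<in> C" "b \<notin> e3" by blast
      have "e3 \<noteq> e1" "e3 \<noteq> e2" using e3 ab c by auto
      hence "e3 \<inter> e1 \<noteq> {}" "e3 \<inter> e2 \<noteq> {}" using adj e1 e2 e3 by blast+
      hence ae3: "a \<in> e3" and ce3: "c \<in> e3" using e3(2) ab c by auto
      obtain p' q' where pq': "p' \<noteq> q'" "e3 = {p',q'}" using assms(1) e3 unfolding twosets_def by blast
      have e3eq: "e3 = {a,c}" using pq' ae3 ce3 ca by auto
      have "C = {{a,b},{b,c},{a,c}}"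
      proof
        show "{{a,b},{b,c},{a,c}} \<subseteq> C" using e1 e2 e3 ab c e3eq by auto
      next
        show "C \<subseteq> {{a,b},{b,c},{a,c}}"
        proof
          fix e assume e: "e \<in> C"
          show "e \<in> {{a,b},{b,c},{a,c}}"
          proof (rule ccontr)
            assume ne: "e \<notin> {{a,b},{b,c},{a,c}}"
            obtain r s where rs: "r \<noteq> s" "e = {r,s}" using assms(1) e unfolding twosets_def by blast
            have "e \<inter> {a,b} \<noteq> {}" "e \<inter> {b,c} \<noteq> {}" "e \<inter> {a,c} \<noteq> {}"
              using adj[OF e e1] adj[OF e e2(1)] adj[OF e e3(1)] ne ab c e3eq by auto
            thus False using rs ne ab cb ca by auto
          qed
        qed
      qed
      thus ?thesis using ab cb ca by blast
    qed
  qed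
qed

definition deg3 :: "'a set set \<Rightarrow> bool" where
  "deg3 H \<longleftrightarrow> (\<forall>v. card {e\<in>H. v \<in> e} \<le> 3)"

definition tri :: "'a set set \<Rightarrow> 'a \<Rightarrow> 'a \<Rightarrow> 'a \<Rightarrow> bool" where
  "tri H a b c \<longleftrightarrow> a \<noteq> b \<and> b \<noteq> c \<and> a \<noteq> c \<and> {a,b} \<in> H \<and> {b,c} \<in> H \<and> {a,c} \<in> H"

lemma nbr3:
  assumes "finite H" "deg3 H" "{v,p} \<in> H" "{v,q} \<in> H" "{v,r} \<in> H" "{v,s} \<in> H"
    "p \<noteq> q" "q \<noteq> r" "p \<noteq> r" "v \<noteq> p" "v \<noteq> q" "v \<noteq> r" "v \<noteq> s"
  shows "s = p \<or> s = q \<or> s = r"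
proof (rule ccontr)
  assume ns: "\<not> (s = p \<or> s = q \<or> s = r)"
  have sub: "{{v,p},{v,q},{v,r},{v,s}} \<subseteq> {e\<in>H. v \<in> e}" using assms by auto
  have "card {{v,p},{v,q},{v,r},{v,s}} = 4"
    using assms ns by (auto simp: doubleton_eq_iff)
  moreover have "card {{v,p},{v,q},{v,r},{v,s}} \<le> card {e\<in>H. v \<in> e}"
    using card_mono[OF _ sub] assms(1) by simp
  moreover have "card {e\<in>H. v \<in> e} \<le> 3" using assms(2) unfolding deg3_def by blast
  ultimately show False by simp
qed

definition intri :: "'a set set \<Rightarrow> 'a set \<Rightarrow> bool" where
  "intri H e \<longleftrightarrow> (\<exists>x y z. tri H x y z \<and> e = {x,y})"

definition noclaw :: "'a set set \<Rightarrow> 'a set set \<Rightarrow> bool" where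
  "noclaw H F \<longleftrightarrow> \<not> (\<exists>a b c d. tri H a b c \<and> d \<noteq> a \<and> d \<noteq> b \<and> d \<noteq> c \<and>
      {d,a} \<in> F \<and> {d,b} \<in> F \<and> {d,c} \<in> F)"

lemma out_aux:
  assumes "finite H" "deg3 H" "twosets H" "F \<subseteq> H" "\<forall>e\<in>F. intri H e"
    "a \<noteq> b" "a \<noteq> c" "b \<noteq> c" "{a,b} \<in> H" "{a,c} \<in> H" "{a,b} \<notin> F" "{a,c} \<notin> F"
    "f \<in> F" "a \<in> f"
  shows "\<exists>a'. f = {a,a'} \<and> a' \<noteq> a \<and> a' \<noteq> b \<and> a' \<noteq> c \<and> ({a',b} \<in> H \<or> {a',c} \<in> H)"
proof -
  have fH: "f \<in> H" using assms(4,13) by blast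
  obtain p q where pq: "p \<noteq> q" "f = {p,q}" using assms(3) fH unfolding twosets_def by blast
  obtain a' where a': "f = {a,a'}" "a' \<noteq> a" using pq assms(14) by auto
  have a'b: "a' \<noteq> b" using a' assms(11,13) by auto
  have a'c: "a' \<noteq> c" using a' assms(12,13) by auto
  obtain x y z where xyz: "tri H x y z" "f = {x,y}" using assms(5,13) unfolding intri_def by blast
  have "{a,z} \<in> H \<and> {a',z} \<in> H \<and> z \<noteq> a \<and> z \<noteq> a'"
  proof (cases "x = a")
    case True
    hence "y = a'" using xyz(2) a' by (auto simp: doubleton_eq_iff)
    thus ?thesis using True xyz(1) unfolding tri_def by (auto simp: insert_commute)
  next
    case False
    hence "x = a'" "y = a" using xyz(2) a' by (auto simp: doubleton_eq_iff)
    thus ?thesis using xyz(1) unfolding tri_def by (auto simp: insert_commute)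
  qed
  hence z: "{a,z} \<in> H" "{a',z} \<in> H" "z \<noteq> a" "z \<noteq> a'" by auto
  have "z = b \<or> z = c \<or> z = a'"
    by (rule nbr3[OF assms(1,2,9,10) _ z(1)]) (use a' a'b a'c assms z in auto)
  hence "z = b \<or> z = c" using z by auto
  hence "{a',b} \<in> H \<or> {a',c} \<in> H" using z by auto
  thus ?thesis using a' a'b a'c by blast
qed

lemma same_out:
  assumes "finite H" "deg3 H" "{b,a} \<in> H" "{b,c} \<in> H" "{b,b'} \<in> H" "{b,a'} \<in> H"
    "a \<noteq> c" "c \<noteq> b'" "a \<noteq> b'" "b \<noteq> a" "b \<noteq> c" "b \<noteq> b'" "a' \<noteq> b" "a' \<noteq> a" "a' \<noteq> c"
  shows "a' = b'"
  using nbr3[OF assms(1-6)] assms by auto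

lemma some_uncovered:
  assumes "finite H" "deg3 H" "twosets H" "F \<subseteq> H" "\<forall>e\<in>F. intri H e" "noclaw H F"
    "tri H a b c" "{a,b} \<notin> F" "{b,c} \<notin> F" "{a,c} \<notin> F"
  shows "(\<forall>f\<in>F. a \<notin> f) \<or> (\<forall>f\<in>F. b \<notin> f) \<or> (\<forall>f\<in>F. c \<notin> f)"
proof (rule ccontr)
  assume "\<not> ?thesis"
  then obtain fa fb fc where f: "fa \<in> F" "a \<in> fa" "fb \<in> F" "b \<in> fb" "fc \<in> F" "c \<in> fc" by blast
  have t: "a \<noteq> b" "b \<noteq> c" "a \<noteq> c" "{a,b} \<in> H" "{b,c} \<in> H" "{a,c} \<in> H"
    using assms(7) unfolding tri_def by auto
  have t': "{b,a} \<in> H" "{c,b} \<in> H" "{c,a} \<in> H" "{b,a} \<notin> F" "{c,b} \<notin> F" "{c,a} \<notin> F"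
    using t assms(8-10) by (auto simp: insert_commute)
  obtain a' where a': "fa = {a,a'}" "a' \<noteq> a" "a' \<noteq> b" "a' \<noteq> c" "{a',b} \<in> H \<or> {a',c} \<in> H"
    using out_aux[OF assms(1-5) t(1,3,2) t(4,6) assms(8,10) f(1,2)] by blast
  obtain b' where b': "fb = {b,b'}" "b' \<noteq> b" "b' \<noteq> a" "b' \<noteq> c" "{b',a} \<in> H \<or> {b',c} \<in> H"
    using out_aux[OF assms(1-5) _ t(2) _ t'(1) t(5) t'(4) assms(9) f(3,4)] t by blast
  obtain c' where c': "fc = {c,c'}" "c' \<noteq> c" "c' \<noteq> a" "c' \<noteq> b" "{c',a} \<in> H \<or> {c',b} \<in> H"
    using out_aux[OF assms(1-5) _ _ t(1) t'(3) t'(2) t'(6) t'(5) f(5,6)] t by blast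
  have Ha: "{a,a'} \<in> H" "{b,b'} \<in> H" "{c,c'} \<in> H" using a' b' c' f assms(4) by auto
  have ab_eq: "{a',b} \<in> H \<Longrightarrow> a' = b'"
    by (rule same_out[OF assms(1,2) t'(1) t(5) Ha(2)]) (use a' b' t in \<open>auto simp: insert_commute\<close>)
  have ac_eq: "{a',c} \<in> H \<Longrightarrow> a' = c'"
    by (rule same_out[OF assms(1,2) t'(3) t'(2) Ha(3)]) (use a' c' t in \<open>auto simp: insert_commute\<close>)
  have ba_eq: "{b',a} \<in> H \<Longrightarrow> b' = a'"
    by (rule same_out[OF assms(1,2) t(4) t(6) Ha(1)]) (use a' b' t in \<open>auto simp: insert_commute\<close>)
  have bc_eq: "{b',c} \<in> H \<Longrightarrow> b' = c'"
    by (rule same_out[OF assms(1,2) t'(2) t'(3) Ha(3)]) (use b' c' t in \<open>auto simp: insert_commute\<close>)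
  have ca_eq: "{c',a} \<in> H \<Longrightarrow> c' = a'"
    by (rule same_out[OF assms(1,2) t(6) t(4) Ha(1)]) (use a' c' t in \<open>auto simp: insert_commute\<close>)
  have cb_eq: "{c',b} \<in> H \<Longrightarrow> c' = b'"
    by (rule same_out[OF assms(1,2) t(5) t'(1) Ha(2)]) (use b' c' t in \<open>auto simp: insert_commute\<close>)
  have all: "b' = a'" "c' = a'"
    using a'(5) b'(5) c'(5) ab_eq ac_eq ba_eq bc_eq ca_eq cb_eq by metis+
  have "{a',a} \<in> F" "{a',b} \<in> F" "{a',c} \<in> F"
    using f a' b' c' all by (auto simp: insert_commute)
  thus False using assms(6,7) a' unfolding noclaw_def by blast
qed

lemma tri_swap12: "tri H a b c \<Longrightarrow> tri H b a c"
  unfolding tri_def by (auto simp: insert_commute)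
lemma tri_swap23: "tri H a b c \<Longrightarrow> tri H a c b"
  unfolding tri_def by (auto simp: insert_commute)

lemma claw_aux:
  assumes "finite H" "deg3 H" "F \<subseteq> H" "tri H p q r" "d \<noteq> p" "d \<noteq> q" "d \<noteq> r"
    "{d,p} = {x,y}" "tri H x y z" "{x,z} \<notin> F" "{y,z} \<notin> F"
    "{d,q} \<in> insert {x,y} F" "{d,r} \<in> insert {x,y} F"
  shows False
proof -
  have pqr: "p \<noteq> q" "q \<noteq> r" "p \<noteq> r" using assms(4) unfolding tri_def by auto
  have dq: "{d,q} \<in> F" using assms(8,12) pqr assms(5-7) by (auto simp: doubleton_eq_iff)
  have dr: "{d,r} \<in> F" using assms(8,13) pqr assms(5-7) by (auto simp: doubleton_eq_iff)
  have xyz: "x \<noteq> y" "y \<noteq> z" "x \<noteq> z" "{x,y} \<in> H" "{y,z} \<in> H" "{x,z} \<in> H"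
    using assms(9) unfolding tri_def by auto
  have dz: "{d,z} \<in> H \<and> z \<noteq> d \<and> z \<noteq> p \<and> {d,z} \<notin> F"
  proof (cases "d = x")
    case True
    hence "p = y" using assms(8) by (auto simp: doubleton_eq_iff)
    thus ?thesis using True xyz assms(10) by auto
  next
    case False
    hence "d = y" "p = x" using assms(8) by (auto simp: doubleton_eq_iff)
    thus ?thesis using xyz assms(11) by auto
  qed
  have "{d,p} \<in> H" using assms(8) xyz by simp
  moreover have "{d,q} \<in> H" "{d,r} \<in> H" using dq dr assms(3) by auto
  ultimately have "z = p \<or> z = q \<or> z = r"
    using nbr3[OF assms(1,2), of d p q r z] dz pqr assms(5-7) by auto
  thus False using dz dq dr by auto
qed

lemma noclaw_insert:
  assumes "finite H" "deg3 H" "F \<subseteq> H" "noclaw H F" "tri H x y z" "{x,z} \<notin> F" "{y,z} \<notin> F"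
  shows "noclaw H (insert {x,y} F)"
  unfolding noclaw_def
proof
  assume "\<exists>a b c d. tri H a b c \<and> d \<noteq> a \<and> d \<noteq> b \<and> d \<noteq> c \<and>
      {d,a} \<in> insert {x,y} F \<and> {d,b} \<in> insert {x,y} F \<and> {d,c} \<in> insert {x,y} F"
  then obtain p q r d where c: "tri H p q r" "d \<noteq> p" "d \<noteq> q" "d \<noteq> r"
      "{d,p} \<in> insert {x,y} F" "{d,q} \<in> insert {x,y} F" "{d,r} \<in> insert {x,y} F" by blast
  show False
  proof (cases "{d,p} = {x,y}")
    case True
    show False by (rule claw_aux[OF assms(1-3) c(1-4) True assms(5-7) c(6,7)])
  next
    case np: False
    show False
    proof (cases "{d,q} = {x,y}")
      case True
      show False by (rule claw_aux[OF assms(1-3) tri_swap12[OF c(1)] c(3,2,4) True assms(5-7) c(5,7)])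
    next
      case nq: False
      show False
      proof (cases "{d,r} = {x,y}")
        case True
        have "tri H r q p" using c(1) unfolding tri_def by (auto simp: insert_commute)
        show False by (rule claw_aux[OF assms(1-3) \<open>tri H r q p\<close> c(4,3,2) True assms(5-7) c(6,5)])
      next
        case False
        thus False using np nq c assms(4) unfolding noclaw_def by blast
      qed
    qed
  qed
qed

lemma tri_cover:
  assumes "finite H" "twosets H" "deg3 H"
  shows "\<exists>F. F \<subseteq> H \<and> leafy F \<and> (\<forall>a b c. tri H a b c \<longrightarrow> {a,b} \<in> F \<or> {b,c} \<in> F \<or> {a,c} \<in> F)"
proof -
  define S where "S = {F. F \<subseteq> H \<and> leafy F \<and> (\<forall>e\<in>F. intri H e) \<and> noclaw H F}"
  have "S \<subseteq> Pow H" unfolding S_def by blast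
  hence fS: "finite S" using assms(1) finite_subset by blast
  have "{} \<in> S" unfolding S_def noclaw_def using leafy_empty by simp
  then obtain F where F: "F \<in> S" "\<forall>F'\<in>S. card F' \<le> card F" using max_card_ex[OF fS] by blast
  have FH: "F \<subseteq> H" and lF: "leafy F" and iF: "\<forall>e\<in>F. intri H e" and nF: "noclaw H F"
    using F(1) unfolding S_def by auto
  have fF: "finite F" using FH assms(1) finite_subset by blast
  have "\<forall>a b c. tri H a b c \<longrightarrow> {a,b} \<in> F \<or> {b,c} \<in> F \<or> {a,c} \<in> F"
  proof (intro allI impI, rule ccontr)
    fix a b c assume t: "tri H a b c" and nh: "\<not> ({a,b} \<in> F \<or> {b,c} \<in> F \<or> {a,c} \<in> F)"
    hence nh': "{a,b} \<notin> F" "{b,c} \<notin> F" "{a,c} \<notin> F" by auto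
    have tt: "{a,b} \<in> H" "{b,c} \<in> H" "{a,c} \<in> H" using t unfolding tri_def by auto
    have ext: "\<And>x y z u. tri H x y z \<Longrightarrow> {x,z} \<notin> F \<Longrightarrow> {y,z} \<notin> F \<Longrightarrow> {x,y} \<notin> F
         \<Longrightarrow> u \<in> {x,y} \<Longrightarrow> (\<forall>f\<in>F. u \<notin> f) \<Longrightarrow> False"
    proof -
      fix x y z u assume a: "tri H x y z" "{x,z} \<notin> F" "{y,z} \<notin> F" "{x,y} \<notin> F"
        "u \<in> {x,y}" "\<forall>f\<in>F. u \<notin> f"
      have "{x,y} \<in> H" using a(1) unfolding tri_def by auto
      moreover have "leafy (insert {x,y} F)" by (rule leafy_insert[OF lF a(5,6)])
      moreover have "intri H {x,y}" using a(1) unfolding intri_def by blast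
      moreover have "noclaw H (insert {x,y} F)" by (rule noclaw_insert[OF assms(1,3) FH nF a(1-3)])
      ultimately have "insert {x,y} F \<in> S" using FH iF unfolding S_def by auto
      hence "card (insert {x,y} F) \<le> card F" using F(2) by blast
      thus False using a(4) fF by simp
    qed
    have "(\<forall>f\<in>F. a \<notin> f) \<or> (\<forall>f\<in>F. b \<notin> f) \<or> (\<forall>f\<in>F. c \<notin> f)"
      by (rule some_uncovered[OF assms(1,3,2) FH iF nF t nh'])
    moreover have "\<not> (\<forall>f\<in>F. a \<notin> f)" using ext[OF t nh'(3) nh'(2) nh'(1), of a] by blast
    moreover have "\<not> (\<forall>f\<in>F. b \<notin> f)" using ext[OF t nh'(3) nh'(2) nh'(1), of b] by blast
    moreover have "tri H b c a" using t unfolding tri_def by (auto simp: insert_commute)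
    hence "\<not> (\<forall>f\<in>F. c \<notin> f)"
      using ext[of b c a c] nh' by (auto simp: insert_commute)
    ultimately show False by blast
  qed
  thus ?thesis using FH lF by blast
qed

lemma star_clique: "is_clique line_adj {e\<in>H. v \<in> e}"
  unfolding is_clique_def line_adj_def by blast

theorem mainTheorem19:
  fixes V :: "'a set" and E :: "'a set set"
  assumes "simple_graph V E"
  shows "perfectly_divisible E line_adj"
proof -
  have fV: "finite V" and eE: "\<forall>e\<in>E. \<exists>u v. u \<in> V \<and> v \<in> V \<and> u \<noteq> v \<and> e = {u, v}"
    using assms unfolding simple_graph_def by auto
  have sub: "E \<subseteq> Pow V"
  proof
    fix e assume "e \<in> E"
    then obtain u v where "u \<in> V" "v \<in> V" "e = {u, v}" using eE by blast
    thus "e \<in> Pow V" by simp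
  qed
  have fE: "finite E" using finite_subset[OF sub] fV by simp
  have tE: "twosets E" unfolding twosets_def
  proof
    fix e assume "e \<in> E"
    then obtain u v where "u \<noteq> v" "e = {u, v}" using eE by blast
    thus "\<exists>u v. u \<noteq> v \<and> e = {u, v}" by blast
  qed
  show ?thesis unfolding perfectly_divisible_def
  proof (intro allI impI)
    fix H assume HE: "H \<subseteq> E" and Hne: "H \<noteq> {}"
    have fH: "finite H" using HE fE finite_subset by blast
    have tH: "twosets H" using HE tE unfolding twosets_def by (meson subsetD)
    have "\<exists>F. F \<subseteq> H \<and> leafy F \<and>
      (deg3 H \<longrightarrow> (\<forall>a b c. tri H a b c \<longrightarrow> {a,b} \<in> F \<or> {b,c} \<in> F \<or> {a,c} \<in> F))"
    proof (cases "deg3 H")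
      case True
      then obtain F where "F \<subseteq> H" "leafy F" "\<forall>a b c. tri H a b c \<longrightarrow> {a,b} \<in> F \<or> {b,c} \<in> F \<or> {a,c} \<in> F"
        using tri_cover[OF fH tH] by blast
      thus ?thesis by blast
    next
      case False
      hence "{} \<subseteq> H \<and> leafy {} \<and>
      (deg3 H \<longrightarrow> (\<forall>a b c. tri H a b c \<longrightarrow> {a,b} \<in> ({}::'a set set) \<or> {b,c} \<in> ({}::'a set set) \<or> {a,c} \<in> ({}::'a set set)))"
        using leafy_empty by simp
      thus ?thesis by (rule exI)
    qed
    then obtain F where F: "F \<subseteq> H" "leafy F"
      "deg3 H \<Longrightarrow> (\<forall>a b c. tri H a b c \<longrightarrow> {a,b} \<in> F \<or> {b,c} \<in> F \<or> {a,c} \<in> F)" by blast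
    obtain A where A: "F \<subseteq> A" "A \<subseteq> H" "leafy A" "\<forall>v. (\<exists>e\<in>H. v \<in> e) \<longrightarrow> (\<exists>e\<in>A. v \<in> e)"
      using cover[OF fH F(2,1)] by blast
    define B where "B = H - A"
    have fA: "finite A" using A(2) fH finite_subset by blast
    have tA: "twosets A" using A(2) tH unfolding twosets_def by (meson subsetD)
    have pA: "perfect A line_adj" by (rule leafy_perfect[OF fA A(3) tA])
    have fB: "finite B" using fH B_def by simp
    obtain C where C: "C \<subseteq> B" "is_clique line_adj C" "card C = clique_number line_adj B"
      using cn_obtain[OF fB] by blast
    have "C \<subseteq> H" using C(1) B_def by blast
    hence tC: "twosets C" using tH unfolding twosets_def by (meson subsetD)
    obtain e0 where e0: "e0 \<in> H" using Hne by blast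
    have "card {e0} \<le> clique_number line_adj H"
      by (rule cn_ge[OF fH]) (use e0 in \<open>auto simp: is_clique_def\<close>)
    hence w1: "1 \<le> clique_number line_adj H" by simp
    have "card C < clique_number line_adj H"
    proof (cases "\<exists>v. \<forall>e\<in>C. v \<in> e")
      case True
      then obtain v where v: "\<forall>e\<in>C. v \<in> e" by blast
      show ?thesis
      proof (cases "C = {}")
        case True thus ?thesis using w1 by simp
      next
        case False
        then obtain e where e: "e \<in> C" by blast
        hence "e \<in> H" "v \<in> e" using C(1) B_def v by auto
        then obtain a where a: "a \<in> A" "v \<in> a" using A(4) by blast
        define Sv where "Sv = {e\<in>H. v \<in> e}"
        have fSv: "finite Sv" using fH Sv_def by simp
        have aS: "a \<in> Sv" using a A(2) Sv_def by blast
        have "C \<subseteq> Sv - {a}" using C(1) v a(1) unfolding B_def Sv_def by auto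
        hence "card C \<le> card (Sv - {a})" using fSv by (simp add: card_mono)
        also have "\<dots> < card Sv" using aS fSv by (meson card_Diff1_less)
        also have "\<dots> \<le> clique_number line_adj H"
          by (rule cn_ge[OF fH]) (auto simp: Sv_def star_clique)
        finally show ?thesis .
      qed
    next
      case False
      then obtain a b c where abc: "a \<noteq> b" "b \<noteq> c" "a \<noteq> c" "C = {{a,b},{b,c},{a,c}}"
        using clique_struct[OF tC C(2)] by blast
      have c3: "card C = 3" using abc by (auto simp: doubleton_eq_iff)
      show ?thesis
      proof (cases "deg3 H")
        case True
        have "tri H a b c" using abc C(1) B_def unfolding tri_def by auto
        hence "{a,b} \<in> F \<or> {b,c} \<in> F \<or> {a,c} \<in> F" using F(3)[OF True] by blast
        hence "{a,b} \<in> A \<or> {b,c} \<in> A \<or> {a,c} \<in> A" using A(1) by blast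
        moreover have "{a,b} \<in> B" "{b,c} \<in> B" "{a,c} \<in> B" using abc C(1) by auto
        ultimately show ?thesis using B_def by blast
      next
        case False
        then obtain v where v: "\<not> card {e\<in>H. v \<in> e} \<le> 3" unfolding deg3_def by blast
        have "card {e\<in>H. v \<in> e} \<le> clique_number line_adj H"
          by (rule cn_ge[OF fH]) (auto simp: star_clique)
        thus ?thesis using v c3 by simp
      qed
    qed
    hence "clique_number line_adj B < clique_number line_adj H" using C(3) by simp
    moreover have "A \<union> B = H" "A \<inter> B = {}" using A(2) B_def by auto
    ultimately show "\<exists>A B. A \<union> B = H \<and> A \<inter> B = {} \<and> perfect A line_adj \<and>
               clique_number line_adj B < clique_number line_adj H" using pA by blast
  qed
qed

end
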